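(* For any refund schemes $(R_j)_{j\in P}$ satisfying Contribution Monotonicity, there exist instances of the combinatorial civic crowdfunding game $\mathcal{M}_{CC}$ and contributions of the agents in $N\setminus\{i'\}$ such that agent $i'$ has no optimal strategy, i.e., the supremum of agent $i'$'s total utility over its feasible contribution vectors (given the others' contributions) is not attained.
   Context: Combinatorial civic crowdfunding game $\mathcal{M}_{CC}$: projects $P=\{1,\dots,p\}$ with target costs $T_j>0$; agents $N=\{1,\dots,n\}$ with budgets $\gamma_i\ge0$ and valuations $\theta_{ij}\ge0$. Agent $i$ contributes $x_{ij}\in\mathbb{R}_+$ with $\sum_j x_{ij}\le\gamma_i$; $C_j=\sum_i x_{ij}$; project $j$ funded iff $C_j\ge T_j$. Anonymous refund scheme $R_j(B_j,x_{ij},C_j)\ge0$ with bonus $B_j>0$ gives refund $r_{ij}$, with $\sum_i r_{ij}=B_j$. Utility of $i$ from $j$: $\theta_{ij}-x_{ij}$ if $C_j\ge T_j$, $r_{ij}$ if $C_j<T_j$; total utility is the sum over projects. Contribution Monotonicity: $R_j$ differentiable and strictly increasing in the contribution. *)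

theory Defs
  imports "HOL-Analysis.Analysis"
begin

text \<open>Refund schemes are given as a family R indexed by projects j (1-based);
  R j B x C is the refund of an agent contributing x to project j when the
  bonus is B and the total contribution is C.\<close>

type_synonym refund_schemes = "nat \<Rightarrow> real \<Rightarrow> real \<Rightarrow> real \<Rightarrow> real"

definition refund_scheme :: "refund_schemes \<Rightarrow> bool" where
  "refund_scheme R \<longleftrightarrow>
     (\<forall>j B x C. B > 0 \<longrightarrow> 0 \<le> x \<longrightarrow> x \<le> C \<longrightarrow> 0 \<le> R j B x C) \<and>
     (\<forall>j B (A::nat set) f. B > 0 \<longrightarrow> finite A \<longrightarrow> (\<forall>i\<in>A. 0 \<le> f i) \<longrightarrow>
        sum f A > 0 \<longrightarrow> (\<Sum>i\<in>A. R j B (f i) (sum f A)) = B)"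

text \<open>Contribution Monotonicity: an agent's refund is differentiable and strictly
  increasing in its own contribution x (the others' total c > 0 being fixed,
  so that the total contribution is c + x).\<close>
definition contribution_monotone :: "refund_schemes \<Rightarrow> bool" where
  "contribution_monotone R \<longleftrightarrow>
     (\<forall>j B c. B > 0 \<longrightarrow> c > 0 \<longrightarrow>
        strict_mono_on {0..} (\<lambda>x. R j B x (c + x)) \<and>
        (\<forall>x\<ge>0. (\<lambda>y. R j B y (c + y)) differentiable (at x within {0..})))"

definition total_contrib :: "nat \<Rightarrow> (nat \<Rightarrow> nat \<Rightarrow> real) \<Rightarrow> nat \<Rightarrow> real" where
  "total_contrib n x j = (\<Sum>k\<in>{1..n}. x k j)"

definition agent_utility ::
  "refund_schemes \<Rightarrow> (nat \<Rightarrow> real) \<Rightarrow> (nat \<Rightarrow> real) \<Rightarrow> (nat \<Rightarrow> nat \<Rightarrow> real)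
   \<Rightarrow> nat \<Rightarrow> nat \<Rightarrow> (nat \<Rightarrow> nat \<Rightarrow> real) \<Rightarrow> nat \<Rightarrow> real" where
  "agent_utility R B T \<theta> n p x i =
     (\<Sum>j\<in>{1..p}. if total_contrib n x j \<ge> T j then \<theta> i j - x i j
                   else R j (B j) (x i j) (total_contrib n x j))"

definition feasible_strategy :: "nat \<Rightarrow> real \<Rightarrow> (nat \<Rightarrow> real) \<Rightarrow> bool" where
  "feasible_strategy p g y \<longleftrightarrow> (\<forall>j\<in>{1..p}. 0 \<le> y j) \<and> (\<Sum>j\<in>{1..p}. y j) \<le> g"

end

theory Submission
  imports Defs
begin

theorem theorem5:
  fixes R :: refund_schemes
  assumes "refund_scheme R"
    and "contribution_monotone R"
  shows "\<exists>(n::nat) (p::nat) (T::nat \<Rightarrow> real) (B::nat \<Rightarrow> real) (\<gamma>::nat \<Rightarrow> real)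
           (\<theta>::nat \<Rightarrow> nat \<Rightarrow> real) (i'::nat) (x::nat \<Rightarrow> nat \<Rightarrow> real).
     1 \<le> n \<and> 1 \<le> p \<and> i' \<in> {1..n} \<and>
     (\<forall>j\<in>{1..p}. 0 < T j \<and> 0 < B j) \<and>
     (\<forall>i\<in>{1..n}. 0 \<le> \<gamma> i) \<and>
     (\<forall>i\<in>{1..n}. \<forall>j\<in>{1..p}. 0 \<le> \<theta> i j) \<and>
     (\<forall>i\<in>{1..n} - {i'}. feasible_strategy p (\<gamma> i) (x i)) \<and>
     (let S = {y. feasible_strategy p (\<gamma> i') y};
          U = (\<lambda>y. agent_utility R B T \<theta> n p (x(i' := y)) i')
      in bdd_above (U ` S) \<and> (\<forall>y\<in>S. U y < Sup (U ` S)))"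
proof -
  define r where "r t = R 1 1 t (1 + t)" for t
  have mono: "strict_mono_on {0..} r"
    using assms(2) unfolding contribution_monotone_def r_def by auto
  have r0: "0 \<le> r 0"
    using assms(1) unfolding refund_scheme_def r_def by auto
  define x :: "nat \<Rightarrow> nat \<Rightarrow> real" where "x = (\<lambda>i j. if i = 2 then 1 else 0)"
  define T :: "nat \<Rightarrow> real" where "T = (\<lambda>_. 2)"
  define B :: "nat \<Rightarrow> real" where "B = (\<lambda>_. 1)"
  define g :: "nat \<Rightarrow> real" where "g = (\<lambda>i. if i = 1 then 2 else 1)"
  define th :: "nat \<Rightarrow> nat \<Rightarrow> real" where "th = (\<lambda>_ _. 0)"
  define S where "S = {y. feasible_strategy 1 (g 1) y}"
  define U where "U = (\<lambda>y. agent_utility R B T th 2 1 (x(1 := y)) 1)"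
  have Ueq: "U y = (if 1 \<le> y 1 then - y 1 else r (y 1))" for y
    unfolding U_def agent_utility_def total_contrib_def x_def T_def th_def B_def r_def
    by (simp add: numeral_2_eq_2 add.commute)
  have S1: "y \<in> S \<Longrightarrow> 0 \<le> y 1 \<and> y 1 \<le> 2" for y
    unfolding S_def feasible_strategy_def g_def by auto
  have le: "0 \<le> a \<Longrightarrow> a \<le> b \<Longrightarrow> r a \<le> r b" for a b
    using mono by (metis atLeast_iff order_le_less order_trans strict_mono_onD)
  have bound: "U y \<le> r 1" if "y \<in> S" for y
  proof (cases "1 \<le> y 1")
    case True
    then show ?thesis using Ueq[of y] r0 le[of 0 1] by simp
  next
    case False
    then show ?thesis using Ueq[of y] S1[OF that] le[of "y 1" 1] by simp
  qed
  have bdd: "bdd_above (U ` S)" using bound by (intro bdd_aboveI[of _ "r 1"]) auto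
  have feas: "(\<lambda>j. t) \<in> S" if "0 \<le> t" "t \<le> 2" for t
    using that unfolding S_def feasible_strategy_def g_def by simp
  have strict: "U y < Sup (U ` S)" if "y \<in> S" for y
  proof (cases "1 \<le> y 1")
    case True
    have "U (\<lambda>j. 0) \<le> Sup (U ` S)"
      using bdd feas[of 0] by (intro cSup_upper) auto
    moreover have "U (\<lambda>j. 0) = r 0" using Ueq[of "\<lambda>j. 0"] by simp
    ultimately show ?thesis using Ueq[of y] True r0 by simp
  next
    case False
    define t where "t = (y 1 + 1) / 2"
    have t: "y 1 < t" "t < 1" "0 \<le> y 1" "t \<le> 2" using False S1[OF that] by (auto simp: t_def)
    have "U (\<lambda>j. t) \<le> Sup (U ` S)"
      using bdd feas[of t] t by (intro cSup_upper) auto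
    moreover have "U (\<lambda>j. t) = r t" using Ueq[of "\<lambda>j. t"] t by simp
    moreover have "r (y 1) < r t" using mono t by (intro strict_mono_onD[OF mono]) auto
    ultimately show ?thesis using Ueq[of y] False by simp
  qed
  have main: "bdd_above (U ` S) \<and> (\<forall>y\<in>S. U y < Sup (U ` S))"
    using bdd strict by blast
  have L: "(let S = {y. feasible_strategy 1 (g 1) y};
          U = (\<lambda>y. agent_utility R B T th 2 1 (x(1 := y)) 1)
      in bdd_above (U ` S) \<and> (\<forall>y\<in>S. U y < Sup (U ` S)))"
    using main unfolding Let_def S_def U_def by assumption
  show ?thesis
    apply (rule exI[of _ 2], rule exI[of _ 1], rule exI[of _ T], rule exI[of _ B],
           rule exI[of _ g], rule exI[of _ th], rule exI[of _ 1], rule exI[of _ x])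
    apply (intro conjI)
    using L
    by (auto simp: T_def B_def g_def th_def x_def feasible_strategy_def)
qed

end
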